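(* Let $d\ge 1$, $\Lambda=(0,+\infty)$, and let $\chi\colon\Lambda\to\mathbb{R}_+^d$ be a continuous bounded function with $\operatorname{supp}\chi=[\lambda_{\min},\lambda_{\max}]$, where $0\le\lambda_{\min}<\lambda_{\max}<\infty$, and $\chi(\lambda)\neq\mathbf{0}$ for $\lambda\in(\lambda_{\min},\lambda_{\max})$. Let $\eta(\lambda)=\chi(\lambda)/\langle\mathbf{1},\chi(\lambda)\rangle$ for $\lambda\in(\lambda_{\min},\lambda_{\max})$, and assume $\eta$ extends continuously to $[\lambda_{\min},\lambda_{\max}]$. Let $\mathcal{P}=\{\int_\Lambda\chi\,\mathrm{d}\mu:\mu \text{ a finite nonnegative Borel measure on }\Lambda\}$, assume $\mathcal{P}$ has nonempty interior, let $A=\{\mathbf{x}\in\mathbb{R}^d:\langle\mathbf{x},\mathbf{1}\rangle=1\}$ and $\mathcal{T}=\mathcal{P}\cap A$. Then \[ \operatorname{int}\operatorname{conv}\bigl(\eta([\lambda_{\min},\lambda_{\max}])\bigr)\subset\mathcal{T}\subset\operatorname{conv}\bigl(\eta([\lambda_{\min},\lambda_{\max}])\bigr), \] where the interior is taken relative to the hyperplane $A$.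
   Context: $\mathbf{1}$ is the all-ones vector and $\langle\cdot,\cdot\rangle$ the dot product. $\mathcal{P}$ is called the color cone, $\mathcal{T}$ the color triangle, and $\eta([\lambda_{\min},\lambda_{\max}])$ the spectral locus. Subsets of $A$ are considered with the relative topology of $A$. *)

theory Defs
  imports "HOL-Analysis.Analysis"
begin

definition ones :: "real ^ 'n" where
  "ones = (\<chi> i. 1)"

definition color_cone :: "(real \<Rightarrow> real ^ 'n) \<Rightarrow> (real ^ 'n) set" where
  "color_cone chi =
     {integral\<^sup>L M chi | M :: real measure.
        sets M = sets (restrict_space borel {0<..}) \<and> finite_measure M}"

definition hyperplane_A :: "(real ^ 'n) set" where
  "hyperplane_A = {x. x \<bullet> ones = 1}"

definition color_triangle :: "(real \<Rightarrow> real ^ 'n) \<Rightarrow> (real ^ 'n) set" where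
  "color_triangle chi = color_cone chi \<inter> hyperplane_A"

end

theory Submission
  imports Defs
begin

lemma ones_inner_pos:
  fixes v :: "real ^ 'n"
  assumes "\<And>i. 0 \<le> v $ i" "v \<noteq> 0"
  shows "0 < ones \<bullet> v"
proof -
  have eq: "ones \<bullet> v = (\<Sum>i\<in>UNIV. v $ i)" by (simp add: inner_vec_def ones_def)
  have "ones \<bullet> v \<noteq> 0"
  proof
    assume "ones \<bullet> v = 0"
    then have "\<forall>i\<in>UNIV. v $ i = 0" using eq assms(1) by (simp add: sum_nonneg_eq_0_iff)
    then show False using assms(2) by (simp add: vec_eq_iff)
  qed
  moreover have "0 \<le> ones \<bullet> v" using eq assms(1) by (simp add: sum_nonneg)
  ultimately show ?thesis by simp
qed

theorem lemma1:
  fixes chi :: "real \<Rightarrow> real ^ 'n"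
    and eta :: "real \<Rightarrow> real ^ 'n"
    and lmin lmax :: real
  assumes "0 \<le> lmin" and "lmin < lmax"
    and "continuous_on {0<..} chi"
    and "bounded (chi ` {0<..})"
    and "\<And>l i. 0 < l \<Longrightarrow> 0 \<le> chi l $ i"
    and "closure {l \<in> {0<..}. chi l \<noteq> 0} = {lmin..lmax}"
    and "\<And>l. l \<in> {lmin<..<lmax} \<Longrightarrow> chi l \<noteq> 0"
    and "continuous_on {lmin..lmax} eta"
    and "\<And>l. l \<in> {lmin<..<lmax} \<Longrightarrow> eta l = chi l /\<^sub>R (ones \<bullet> chi l)"
    and "interior (color_cone chi) \<noteq> {}"
  shows "(top_of_set hyperplane_A) interior_of (convex hull (eta ` {lmin..lmax}))
           \<subseteq> color_triangle chi \<and>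
         color_triangle chi \<subseteq> convex hull (eta ` {lmin..lmax})"
proof -
  define A :: "(real ^ 'n) set" where "A = hyperplane_A"
  have Aeq: "A = {x. ones \<bullet> x = 1}" unfolding A_def hyperplane_A_def by (simp add: inner_commute)
  have closedA: "closed A" unfolding Aeq by (rule closed_hyperplane)
  have affA: "affine A" unfolding Aeq by (rule affine_hyperplane)
  have spos: "0 < ones \<bullet> chi l" if "l \<in> {lmin<..<lmax}" for l
    using that assms(1,5,7) by (intro ones_inner_pos) auto
  have chi_eta: "chi l = (ones \<bullet> chi l) *\<^sub>R eta l" if "l \<in> {lmin<..<lmax}" for l
    using spos[OF that] assms(9)[OF that] by simp
  have etaA_open: "eta l \<in> A" if "l \<in> {lmin<..<lmax}" for l
    using spos[OF that] assms(9)[OF that] unfolding Aeq by (simp add: inner_commute)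
  have etaA: "eta ` {lmin..lmax} \<subseteq> A"
  proof -
    have "eta ` closure {lmin<..<lmax} \<subseteq> A"
      using assms(2,8) etaA_open closedA by (intro image_closure_subset) auto
    then show ?thesis using assms(2) by simp
  qed
  have zero: "chi l = 0" if "0 < l" "l \<notin> {lmin<..<lmax}" for l
  proof (rule ccontr)
    assume nz: "chi l \<noteq> 0"
    define U where "U = {l \<in> {0<..}. chi l \<noteq> 0}"
    have "open U"
    proof -
      have "U = {0<..} \<inter> chi -` (- {0})" unfolding U_def by auto
      moreover have "open (chi -` (- {0}) \<inter> {0<..})"
        using continuous_on_open_vimage[of "{0<..}" chi] assms(3) by auto
      ultimately show ?thesis by (simp add: Int_commute)
    qed
    moreover have "U \<subseteq> {lmin..lmax}"
    proof -
      have "U \<subseteq> closure U" by (rule closure_subset)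
      then show ?thesis using assms(6) unfolding U_def by simp
    qed
    ultimately have "U \<subseteq> interior {lmin..lmax}" by (meson interior_maximal)
    then show False using that nz unfolding U_def by auto
  qed
  define C where "C = convex hull (eta ` {lmin..lmax})"
  have compC: "compact C" unfolding C_def
    using assms(8) by (intro compact_convex_hull compact_continuous_image) auto
  have CA: "C \<subseteq> A" unfolding C_def by (rule hull_minimal[where S=convex, OF etaA affine_imp_convex[OF affA]])
  have part2: "color_triangle chi \<subseteq> C"
  proof
    fix x assume "x \<in> color_triangle chi"
    then obtain M :: "real measure" where xM: "x = integral\<^sup>L M chi"
      and sM: "sets M = sets (restrict_space borel {0<..})" and fM: "finite_measure M"
      and x1: "ones \<bullet> x = 1"
      unfolding color_triangle_def color_cone_def hyperplane_A_def by (auto simp: inner_commute)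
    have spM: "space M = {0<..}" using sets_eq_imp_space_eq[OF sM] by simp
    have meas: "chi \<in> borel_measurable M"
      using borel_measurable_continuous_on_restrict[OF assms(3)] measurable_cong_sets[OF sM refl] by blast
    obtain B where B: "\<And>l. l \<in> {0<..} \<Longrightarrow> norm (chi l) \<le> B"
      using assms(4) unfolding bounded_iff by auto
    have int: "integrable M chi"
      using finite_measure.integrable_const_bound[OF fM _ meas, of B] B spM by auto
    show "x \<in> C"
    proof (rule ccontr)
      assume "x \<notin> C"
      then obtain a b where ab: "a \<bullet> x < b" "\<And>y. y \<in> C \<Longrightarrow> a \<bullet> y > b"
        using separating_hyperplane_closed_point[of C x] compC compact_imp_closed
          convex_convex_hull unfolding C_def by blast
      have pt: "b * (ones \<bullet> chi l) \<le> a \<bullet> chi l" if "l \<in> space M" for l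
      proof (cases "l \<in> {lmin<..<lmax}")
        case True
        have "eta l \<in> C" unfolding C_def using True by (intro hull_inc) auto
        then have "b \<le> a \<bullet> eta l" using ab(2) by force
        then have "(ones \<bullet> chi l) * b \<le> (ones \<bullet> chi l) * (a \<bullet> eta l)"
          using spos[OF True] by (intro mult_left_mono) auto
        also have "\<dots> = a \<bullet> chi l" by (subst chi_eta[OF True]) simp
        finally show ?thesis by (simp add: mult.commute)
      next
        case False
        then show ?thesis using zero[of l] that spM by simp
      qed
      have "(\<integral>l. b * (ones \<bullet> chi l) \<partial>M) \<le> (\<integral>l. a \<bullet> chi l \<partial>M)"
        using pt int by (intro integral_mono) auto
      then have "b * (ones \<bullet> x) \<le> a \<bullet> x" using int xM by simp
      then show False using x1 ab(1) by simp
    qed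
  qed
  define E where "E = eta ` {lmin<..<lmax}"
  define D where "D = convex hull E"
  have EA: "E \<subseteq> A" unfolding E_def using etaA_open by auto
  have DT: "D \<subseteq> color_triangle chi"
  proof
    fix y assume "y \<in> D"
    then obtain S u where S: "finite S" "S \<subseteq> E" "\<forall>x\<in>S. 0 \<le> u x" "sum u S = 1"
        "(\<Sum>v\<in>S. u v *\<^sub>R v) = y"
      unfolding D_def convex_hull_explicit by blast
    have "\<forall>v\<in>S. \<exists>l. l \<in> {lmin<..<lmax} \<and> eta l = v" using S(2) unfolding E_def by blast
    then obtain g where g: "\<And>v. v \<in> S \<Longrightarrow> g v \<in> {lmin<..<lmax} \<and> eta (g v) = v" by metis
    define w where "w v = u v / (ones \<bullet> chi (g v))" for v
    have w0: "0 \<le> w v" if "v \<in> S" for v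
      unfolding w_def using S(3) that spos[of "g v"] g[OF that] by simp
    define P where "P = point_measure S (\<lambda>v. ennreal (w v))"
    define N where "N = restrict_space (borel :: real measure) {0<..}"
    define M where "M = distr P N g"
    have gm: "g \<in> measurable P N"
      unfolding P_def point_measure_def N_def using g assms(1)
      by (auto simp: space_restrict_space intro: order.strict_trans1[OF assms(1)] dest: g)
    have spP: "space P = S" unfolding P_def by (simp add: space_point_measure)
    have sM: "sets M = sets (restrict_space borel {0<..})" unfolding M_def N_def by simp
    have fM: "finite_measure M"
    proof
      have "space M = space N" unfolding M_def by simp
      then have "emeasure M (space M) = emeasure P (g -` space N \<inter> space P)"
        unfolding M_def by (simp add: emeasure_distr[OF gm])
      also have "g -` space N \<inter> space P = S" using gm spP by (auto simp: measurable_def)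
      also have "emeasure P S = (\<Sum>v\<in>S. ennreal (w v))"
        unfolding P_def using S(1) by (simp add: emeasure_point_measure_finite)
      also have "\<dots> = ennreal (\<Sum>v\<in>S. w v)" using w0 by (simp add: sum_ennreal)
      finally show "emeasure M (space M) \<noteq> \<infinity>" by simp
    qed
    have chim: "chi \<in> borel_measurable N"
      unfolding N_def by (rule borel_measurable_continuous_on_restrict[OF assms(3)])
    have "integral\<^sup>L M chi = integral\<^sup>L P (\<lambda>v. chi (g v))"
      unfolding M_def by (rule integral_distr[OF gm chim])
    also have "\<dots> = integral\<^sup>L (count_space S) (\<lambda>v. w v *\<^sub>R chi (g v))"
      unfolding P_def point_measure_def using w0
      by (intro integral_density) (auto simp: AE_count_space)
    also have "\<dots> = (\<Sum>v\<in>S. w v *\<^sub>R chi (g v))"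
      using S(1) by (rule lebesgue_integral_count_space_finite)
    also have "\<dots> = (\<Sum>v\<in>S. u v *\<^sub>R v)"
    proof (rule sum.cong[OF refl])
      fix v assume v: "v \<in> S"
      define c where "c = ones \<bullet> chi (g v)"
      have eq': "chi (g v) = c *\<^sub>R v" unfolding c_def using chi_eta[of "g v"] g[OF v] by simp
      have cpos: "c > 0" unfolding c_def using spos[of "g v"] g[OF v] by simp
      have "w v *\<^sub>R chi (g v) = (u v / c) *\<^sub>R (c *\<^sub>R v)"
      proof -
        have "w v = u v / c" unfolding w_def c_def ..
        then show ?thesis by (simp only: eq')
      qed
      also have "\<dots> = u v *\<^sub>R v" using cpos by simp
      finally show "w v *\<^sub>R chi (g v) = u v *\<^sub>R v" .
    qed
    finally have yint: "y = integral\<^sup>L M chi" using S(5) by simp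
    have "ones \<bullet> y = (\<Sum>v\<in>S. u v * (ones \<bullet> v))"
      unfolding S(5)[symmetric] by (simp add: inner_sum_right)
    also have "\<dots> = (\<Sum>v\<in>S. u v)"
      using S(2) EA unfolding Aeq by (intro sum.cong) auto
    finally have "y \<in> A" using S(4) unfolding Aeq by simp
    then show "y \<in> color_triangle chi"
      unfolding color_triangle_def color_cone_def A_def[symmetric] using yint sM fM by blast
  qed
  have KD: "eta ` {lmin..lmax} \<subseteq> closure D"
  proof -
    have "E \<subseteq> D" unfolding D_def by (rule hull_subset)
    then have "E \<subseteq> closure D" using closure_subset[of D] by (rule subset_trans)
    then have "eta ` closure {lmin<..<lmax} \<subseteq> closure D"
      using assms(2,8) unfolding E_def by (intro image_closure_subset) auto
    then show ?thesis using assms(2) by simp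
  qed
  have CD: "C \<subseteq> closure D" unfolding C_def D_def
    by (rule hull_minimal[where S=convex, OF KD[unfolded D_def] convex_closure[OF convex_convex_hull]])
  have DA: "closure D \<subseteq> A"
    using closure_minimal[OF hull_minimal[where S=convex, OF EA affine_imp_convex[OF affA]] closedA] unfolding D_def .
  have affD: "affine hull (closure D) \<subseteq> A" by (rule hull_minimal[where S=affine, OF DA affA])
  have part1: "top_of_set A interior_of C \<subseteq> color_triangle chi"
  proof
    fix x assume "x \<in> top_of_set A interior_of C"
    then obtain T where T: "openin (top_of_set A) T" "x \<in> T" "T \<subseteq> C" by (auto simp: interior_of_def)
    then obtain U where U: "open U" "T = U \<inter> A" by (auto simp: openin_open)
    then obtain e where e: "e > 0" "ball x e \<subseteq> U" using T(2) open_contains_ball by blast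
    have "ball x e \<inter> affine hull (closure D) \<subseteq> ball x e \<inter> A" using affD by auto
    also have "\<dots> \<subseteq> T" using e(2) U(2) by auto
    also have "\<dots> \<subseteq> closure D" using T(3) CD by (rule subset_trans)
    finally have sub: "ball x e \<inter> affine hull (closure D) \<subseteq> closure D" .
    have "x \<in> closure D" using T(2,3) CD by (meson subsetD)
    then have "x \<in> rel_interior (closure D)" unfolding mem_rel_interior_ball using e(1) sub by (intro conjI exI[of _ e]) auto
    then have "x \<in> rel_interior D" unfolding D_def by (simp add: convex_rel_interior_closure)
    then show "x \<in> color_triangle chi" using rel_interior_subset DT by blast
  qed
  show ?thesis using part1 part2 unfolding A_def C_def by blast
qed

end
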